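(* Let $\mathbb{H}$ denote the ring of real quaternions with its usual norm $|\cdot|$, let $B_d(1)=\{x\in\mathbb{H}:|x|<1\}$, and let $S$ be a dense subsemigroup of $(\mathbb{H},+)$ such that $S\cap B_d(1)\setminus\{0\}$ is a subsemigroup of $(B_d(1)\setminus\{0\},\cdot)$. Let $\langle x_n\rangle_{n=1}^\infty$ be a sequence in $S$ such that $\sum_{n=1}^\infty x_n$ converges to $0$, and let $A\subseteq S$ be an IP$^*$ set near $0$ in $S$. Then there exists a sum subsystem $\langle y_n\rangle_{n=1}^\infty$ of $\langle x_n\rangle_{n=1}^\infty$ such that \[FS(\langle y_n\rangle_{n=1}^\infty)\cup FP(\langle y_n\rangle_{n=1}^\infty)\subseteq A.\]
   Context: $FS(\langle y_n\rangle_{n=1}^\infty)=\{\sum_{n\in F}y_n: F\text{ a finite nonempty subset of }\mathbb{N}\}$. $FP(\langle y_n\rangle_{n=1}^\infty)$ is the set of all products of finitely many (at least one) terms of $\langle y_n\rangle_{n=1}^\infty$, taken in any order, with no repetitions (multiplication in $\mathbb{H}$ being noncommutative). A sequence $\langle y_n\rangle_{n=1}^\infty$ is a sum subsystem of $\langle x_n\rangle_{n=1}^\infty$ if there is a sequence $\langle H_n\rangle_{n=1}^\infty$ of nonempty finite subsets of $\mathbb{N}$ with $\max H_n<\min H_{n+1}$ and $y_n=\sum_{t\in H_n}x_t$ for each $n$. A subset $C$ of $S$ is an IP set near $0$ if there is a sequence $\langle z_n\rangle_{n=1}^\infty$ in $S$ with $\sum_{n=1}^\infty z_n$ convergent and $FS(\langle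 z_n\rangle_{n=1}^\infty)\subseteq C$. A subset $D$ of $S$ is an IP$^*$ set near $0$ if for every IP set near $0$ $C\subseteq S$, $C\cap D$ is an IP set near $0$. *)

theory Defs
  imports "HOL-Analysis.Analysis"
begin

text \<open>Real quaternions modelled as real^4 with components (1,i,j,k) at indices 1,2,3,4
  (index 4 of the finite type 4 is the same as 0). The Euclidean norm of real^4 is the
  quaternion norm; addition and topology are the standard ones. Multiplication is
  the Hamilton product.\<close>

type_synonym quat = "real ^ 4"

definition qmult :: "quat \<Rightarrow> quat \<Rightarrow> quat" where
  "qmult x y = (\<chi> n.
     if n = 1 then x$1 * y$1 - x$2 * y$2 - x$3 * y$3 - x$4 * y$4
     else if n = 2 then x$1 * y$2 + x$2 * y$1 + x$3 * y$4 - x$4 * y$3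
     else if n = 3 then x$1 * y$3 - x$2 * y$4 + x$3 * y$1 + x$4 * y$2
     else x$1 * y$4 + x$2 * y$3 - x$3 * y$2 + x$4 * y$1)"

definition qone :: quat where
  "qone = (\<chi> n. if n = 1 then 1 else 0)"

definition qprod_list :: "quat list \<Rightarrow> quat" where
  "qprod_list xs = foldr qmult xs qone"

definition FS :: "(nat \<Rightarrow> 'a::comm_monoid_add) \<Rightarrow> 'a set" where
  "FS y = {sum y F | F. finite F \<and> F \<noteq> {}}"

definition FP :: "(nat \<Rightarrow> quat) \<Rightarrow> quat set" where
  "FP y = {qprod_list (map y l) | l. l \<noteq> [] \<and> distinct l}"

definition sum_subsystem :: "(nat \<Rightarrow> 'a::comm_monoid_add) \<Rightarrow> (nat \<Rightarrow> 'a) \<Rightarrow> bool" where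
  "sum_subsystem y x \<longleftrightarrow> (\<exists>H :: nat \<Rightarrow> nat set.
      (\<forall>n. finite (H n) \<and> H n \<noteq> {}) \<and>
      (\<forall>n. Max (H n) < Min (H (Suc n))) \<and>
      (\<forall>n. y n = sum x (H n)))"

definition IP_near_0 :: "'a::real_normed_vector set \<Rightarrow> 'a set \<Rightarrow> bool" where
  "IP_near_0 S C \<longleftrightarrow> C \<subseteq> S \<and>
     (\<exists>z. (\<forall>n. z n \<in> S) \<and> summable z \<and> FS z \<subseteq> C)"

definition IP_star_near_0 :: "'a::real_normed_vector set \<Rightarrow> 'a set \<Rightarrow> bool" where
  "IP_star_near_0 S D \<longleftrightarrow> D \<subseteq> S \<and>
     (\<forall>C. IP_near_0 S C \<longrightarrow> IP_near_0 S (C \<inter> D))"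

end

theory Submission
  imports Defs
begin

lemma q_eq: "(a::quat) = b \<longleftrightarrow> a$1 = b$1 \<and> a$2 = b$2 \<and> a$3 = b$3 \<and> a$4 = b$4"
  by (simp add: vec_eq_iff forall_4)

lemma qmult_comp:
  "qmult x y $ 1 = x$1 * y$1 - x$2 * y$2 - x$3 * y$3 - x$4 * y$4"
  "qmult x y $ 2 = x$1 * y$2 + x$2 * y$1 + x$3 * y$4 - x$4 * y$3"
  "qmult x y $ 3 = x$1 * y$3 - x$2 * y$4 + x$3 * y$1 + x$4 * y$2"
  "qmult x y $ 4 = x$1 * y$4 + x$2 * y$3 - x$3 * y$2 + x$4 * y$1"
  by (simp_all add: qmult_def)

lemma qone_comp: "qone$1 = 1" "qone$2 = 0" "qone$3 = 0" "qone$4 = 0"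
  by (simp_all add: qone_def)

lemma qmult_assoc: "qmult (qmult a b) c = qmult a (qmult b c)"
  unfolding q_eq qmult_comp by (simp add: algebra_simps)

lemma qmult_qone_right[simp]: "qmult a qone = a"
  unfolding q_eq qmult_comp qone_comp by simp
lemma qmult_qone_left[simp]: "qmult qone a = a"
  unfolding q_eq qmult_comp qone_comp by simp
lemma qmult_zero_left[simp]: "qmult 0 a = 0"
  unfolding q_eq qmult_comp by simp

lemma linear_qmult_left: "linear (qmult p)"
  by (rule linearI) (simp_all add: q_eq qmult_comp algebra_simps)
lemma linear_qmult_right: "linear (\<lambda>t. qmult t p)"
  by (rule linearI) (simp_all add: q_eq qmult_comp algebra_simps)

definition qconj :: "quat \<Rightarrow> quat" where
  "qconj p = (\<chi> n. if n = 1 then p$1 else - p$n)"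
definition nsq :: "quat \<Rightarrow> real" where
  "nsq p = p$1*p$1 + p$2*p$2 + p$3*p$3 + p$4*p$4"

lemma qconj_comp: "qconj p$1 = p$1" "qconj p$2 = - p$2" "qconj p$3 = - p$3" "qconj p$4 = - p$4"
  by (simp_all add: qconj_def)

lemma qconj_left: "qmult (qconj p) (qmult p t) = nsq p *\<^sub>R t"
  unfolding q_eq qmult_comp qconj_comp nsq_def by (simp add: algebra_simps)
lemma qconj_right: "qmult (qmult t p) (qconj p) = nsq p *\<^sub>R t"
  unfolding q_eq qmult_comp qconj_comp nsq_def by (simp add: algebra_simps)

lemma nsq_pos: "p \<noteq> 0 \<Longrightarrow> nsq p \<noteq> 0"
proof -
  assume "p \<noteq> 0"
  then have "p$1 \<noteq> 0 \<or> p$2 \<noteq> 0 \<or> p$3 \<noteq> 0 \<or> p$4 \<noteq> 0" by (simp add: q_eq)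
  then have "nsq p > 0" unfolding nsq_def
    by (smt (verit) mult_pos_pos mult_neg_neg zero_le_square)
  then show ?thesis by simp
qed

lemma left_inv: "p \<noteq> 0 \<Longrightarrow> \<exists>g. linear g \<and> (\<forall>t. g (qmult p t) = t)"
  apply (rule exI[of _ "\<lambda>v. (1 / nsq p) *\<^sub>R qmult (qconj p) v"])
  using linear_qmult_left[of "qconj p"] nsq_pos[of p]
  by (auto simp: qconj_left intro!: linear_compose_scale_right)
lemma right_inv: "p \<noteq> 0 \<Longrightarrow> \<exists>g. linear g \<and> (\<forall>t. g (qmult t p) = t)"
  apply (rule exI[of _ "\<lambda>v. (1 / nsq p) *\<^sub>R qmult v (qconj p)"])
  using linear_qmult_right[of "qconj p"] nsq_pos[of p]
  by (auto simp: qconj_right intro!: linear_compose_scale_right)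

lemma FS_mem: "finite F \<Longrightarrow> F \<noteq> {} \<Longrightarrow> sum y F \<in> FS y"
  unfolding FS_def by blast

lemma FS_E: "v \<in> FS y \<Longrightarrow> (\<And>F. finite F \<Longrightarrow> F \<noteq> {} \<Longrightarrow> v = sum y F \<Longrightarrow> P) \<Longrightarrow> P"
  unfolding FS_def by blast

lemma sum_closed:
  assumes add: "\<forall>a\<in>S. \<forall>b\<in>S. a + b \<in> S" and "finite F" "F \<noteq> {}" "\<forall>n\<in>F. y n \<in> S"
  shows "sum y F \<in> S"
  using assms(2-4)
proof (induction F rule: finite_ne_induct)
  case (singleton x) then show ?case by simp
next
  case (insert x F) then show ?case using add by simp
qed

lemma FS_closed:
  assumes add: "\<forall>a\<in>S. \<forall>b\<in>S. a + b \<in> S" and "\<forall>n. y n \<in> S"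
  shows "FS y \<subseteq> S"
  using sum_closed[OF add] assms(2) by (auto elim!: FS_E)

lemma FS_zero: "FS (\<lambda>_. 0::'a::real_normed_vector) = {0}"
  unfolding FS_def by auto

lemma IP_zero: "0 \<in> C \<Longrightarrow> C \<subseteq> S \<Longrightarrow> IP_near_0 S C"
  unfolding IP_near_0_def
  by (intro conjI exI[of _ "\<lambda>_. 0"]) (auto simp: FS_zero)

lemma IP_nonempty: "IP_near_0 S C \<Longrightarrow> \<exists>c. c \<in> C"
  unfolding IP_near_0_def using FS_mem[of "{0}"] by blast

lemma IPstar_zero: "IP_star_near_0 S A \<Longrightarrow> 0 \<in> S \<Longrightarrow> 0 \<in> A"
proof -
  assume a: "IP_star_near_0 S A" and s: "0 \<in> S"
  have "IP_near_0 S {0}" using IP_zero[of "{0}" S] s by blast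
  then have "IP_near_0 S ({0} \<inter> A)" using a unfolding IP_star_near_0_def by blast
  then obtain c where "c \<in> {0} \<inter> A" using IP_nonempty by blast
  then show "0 \<in> A" by blast
qed

lemma IPstar_S: "IP_star_near_0 S S"
  unfolding IP_star_near_0_def
proof (intro conjI allI impI)
  fix C assume "IP_near_0 S C"
  moreover then have "C \<inter> S = C" unfolding IP_near_0_def by blast
  ultimately show "IP_near_0 S (C \<inter> S)" by simp
qed simp

lemma IPstar_Int: "IP_star_near_0 S A \<Longrightarrow> IP_star_near_0 S B \<Longrightarrow> IP_star_near_0 S (A \<inter> B)"
  unfolding IP_star_near_0_def
proof (intro conjI allI impI)
  assume a: "A \<subseteq> S \<and> (\<forall>C. IP_near_0 S C \<longrightarrow> IP_near_0 S (C \<inter> A))"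
     and b: "B \<subseteq> S \<and> (\<forall>C. IP_near_0 S C \<longrightarrow> IP_near_0 S (C \<inter> B))"
  show "A \<inter> B \<subseteq> S" using a by blast
  fix C assume "IP_near_0 S C"
  then have "IP_near_0 S ((C \<inter> A) \<inter> B)" using a b by blast
  then show "IP_near_0 S (C \<inter> (A \<inter> B))" by (simp add: Int_assoc)
qed

lemma IPstar_Inter:
  assumes "finite I" "\<forall>i\<in>I. IP_star_near_0 S (D i)"
  shows "IP_star_near_0 S (S \<inter> \<Inter>(D ` I))"
  using assms
proof (induction I rule: finite_induct)
  case empty then show ?case using IPstar_S by simp
next
  case (insert i I)
  have "D i \<subseteq> S" using insert.prems unfolding IP_star_near_0_def by auto
  then have "S \<inter> \<Inter>(D ` insert i I) = D i \<inter> (S \<inter> \<Inter>(D ` I))" by auto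
  moreover have "IP_star_near_0 S (S \<inter> \<Inter>(D ` I))" using insert by blast
  moreover have "IP_star_near_0 S (D i)" using insert.prems by blast
  ultimately show ?case using IPstar_Int by metis
qed

lemma FS_reindex:
  assumes "inj \<rho>" shows "FS (z \<circ> \<rho>) \<subseteq> FS z"
proof
  fix v assume "v \<in> FS (z \<circ> \<rho>)"
  then obtain F where F: "finite F" "F \<noteq> {}" "v = sum (z \<circ> \<rho>) F"
    unfolding FS_def by blast
  have "inj_on \<rho> F" using assms inj_on_subset by blast
  then have "v = sum z (\<rho> ` F)" using F(3) sum.reindex[of \<rho> F z] by simp
  then show "v \<in> FS z" using F FS_mem[of "\<rho> ` F" z] by simp
qed

lemma lin_sum: "linear (f::quat\<Rightarrow>quat) \<Longrightarrow> f (sum z F) = sum (\<lambda>n. f (z n)) F"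
  by (simp add: linear_sum)

lemma lin_summable: "linear (f::quat\<Rightarrow>quat) \<Longrightarrow> summable z \<Longrightarrow> summable (\<lambda>n. f (z n))"
  by (simp add: linear_conv_bounded_linear bounded_linear.summable)

lemma freq_small:
  fixes z :: "nat \<Rightarrow> 'a::real_normed_vector"
  assumes lim: "z \<longlonglongrightarrow> 0" and freq: "\<forall>N. \<exists>n\<ge>N. z n \<noteq> 0" and e: "e > 0"
  shows "\<exists>n>M. z n \<noteq> 0 \<and> norm (z n) < e"
proof -
  obtain no where no: "\<forall>n\<ge>no. norm (z n - 0) < e" using lim e unfolding LIMSEQ_iff by blast
  obtain n where "n \<ge> max no (Suc M)" "z n \<noteq> 0" using freq by blast
  then have "norm (z n) < e" "n > M" using no by auto
  then show ?thesis using \<open>z n \<noteq> 0\<close> by blast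
qed

lemma GL:
  fixes f g :: "quat \<Rightarrow> quat"
  assumes add: "\<forall>a\<in>S. \<forall>b\<in>S. a + b \<in> S"
    and lf: "linear f" and lg: "linear g" and gf: "\<forall>t. g (f t) = t"
    and fS: "\<forall>t\<in>S \<inter> ball 0 1 - {0}. f t \<in> S"
    and A: "IP_star_near_0 S A"
  shows "IP_star_near_0 S {t\<in>S. f t \<in> A}"
  unfolding IP_star_near_0_def
proof (intro conjI allI impI)
  show "{t\<in>S. f t \<in> A} \<subseteq> S" by blast
  fix C assume C: "IP_near_0 S C"
  then obtain z where z: "\<forall>n. z n \<in> S" "summable z" "FS z \<subseteq> C" and CS: "C \<subseteq> S"
    unfolding IP_near_0_def by blast
  show "IP_near_0 S (C \<inter> {t\<in>S. f t \<in> A})"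
  proof (cases "\<exists>N. \<forall>n\<ge>N. z n = 0")
    case True
    then obtain N where "z N = 0" by blast
    then have z0: "0 \<in> S" "0 \<in> C" using z FS_mem[of "{N}" z] by (metis, auto)
    then have "0 \<in> A" using IPstar_zero[OF A] by blast
    moreover have "f 0 = 0" using lf linear_0 by blast
    ultimately show ?thesis using z0 by (intro IP_zero) auto
  next
    case False
    then have freq: "\<forall>N. \<exists>n\<ge>N. z n \<noteq> 0" by blast
    have lim: "z \<longlonglongrightarrow> 0" using z(2) summable_LIMSEQ_zero by blast
    have "\<exists>\<rho>. \<forall>k. (z (\<rho> k) \<noteq> 0 \<and> norm (z (\<rho> k)) < (1/2)^Suc k) \<and> \<rho> k < \<rho> (Suc k)"
    proof (rule dependent_nat_choice)
      show "\<exists>n. z n \<noteq> 0 \<and> norm (z n) < (1/2)^Suc 0"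
        using freq_small[OF lim freq, of "(1/2)^Suc 0" 0] by auto
    next
      fix n k assume "z n \<noteq> 0 \<and> norm (z n) < (1/2)^Suc k"
      show "\<exists>n'. (z n' \<noteq> 0 \<and> norm (z n') < (1/2)^Suc (Suc k)) \<and> n < n'"
        using freq_small[OF lim freq, of "(1/2)^Suc (Suc k)" n] by auto
    qed
    then obtain \<rho> where \<rho>: "\<And>k. z (\<rho> k) \<noteq> 0" "\<And>k. norm (z (\<rho> k)) < (1/2)^Suc k"
      "\<And>k. \<rho> k < \<rho> (Suc k)" by blast
    have sm: "strict_mono \<rho>" using \<rho>(3) strict_mono_Suc_iff by blast
    define z' where "z' = z \<circ> \<rho>"
    have FSz': "FS z' \<subseteq> FS z" unfolding z'_def
      using FS_reindex[of \<rho> z] strict_mono_imp_inj_on[OF sm] by blast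
    have z'ball: "\<And>k. z' k \<in> S \<inter> ball 0 1 - {0}"
    proof -
      fix k
      have "((1::real)/2)^Suc k \<le> 1/2" by (simp add: power_le_one)
      then show "z' k \<in> S \<inter> ball 0 1 - {0}" using \<rho>(1) \<rho>(2)[of k] z(1) unfolding z'_def
        by (auto simp: dist_norm)
    qed
    have sz': "summable z'"
    proof (rule summable_comparison_test')
      show "summable (\<lambda>k. ((1::real)/2)^Suc k)" by (simp add: summable_geometric)
      fix k show "norm (z' k) \<le> (1/2)^Suc k" using \<rho>(2)[of k] unfolding z'_def by simp
    qed
    define v where "v = (\<lambda>n. f (z' n))"
    have vS: "\<forall>n. v n \<in> S" using fS z'ball unfolding v_def by blast
    have sv: "summable v" unfolding v_def using lin_summable[OF lf sz'] .
    have "IP_near_0 S (FS v)" unfolding IP_near_0_def using vS sv FS_closed[OF add vS] by blast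
    then have "IP_near_0 S (FS v \<inter> A)" using A unfolding IP_star_near_0_def by blast
    then obtain u where u: "\<forall>n. u n \<in> S" "summable u" "FS u \<subseteq> FS v \<inter> A"
      unfolding IP_near_0_def by blast
    define c where "c = (\<lambda>n. g (u n))"
    have sc: "summable c" unfolding c_def using lin_summable[OF lg u(2)] .
    have key: "\<And>F. finite F \<Longrightarrow> F \<noteq> {} \<Longrightarrow> sum c F \<in> C \<inter> {t\<in>S. f t \<in> A}"
    proof -
      fix F :: "nat set" assume F: "finite F" "F \<noteq> {}"
      have uF: "sum u F \<in> FS v" "sum u F \<in> A" using u(3) FS_mem[OF F, of u] by auto
      then obtain F' where F': "finite F'" "F' \<noteq> {}" "sum u F = sum v F'"
        unfolding FS_def by blast
      define e where "e = sum z' F'"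
      have eC: "e \<in> C" using FS_mem[OF F'(1,2), of z'] FSz' z(3) unfolding e_def by blast
      have fe: "f e = sum u F" unfolding e_def F'(3) v_def using lin_sum[OF lf] by simp
      have "sum c F = g (sum u F)" unfolding c_def using lin_sum[OF lg, of u F] by simp
      also have "\<dots> = e" using gf fe by metis
      finally show "sum c F \<in> C \<inter> {t\<in>S. f t \<in> A}" using eC CS fe uF(2) by auto
    qed
    have cS: "\<forall>n. c n \<in> S" using key[of "{_}"] CS by auto
    have "FS c \<subseteq> C \<inter> {t\<in>S. f t \<in> A}"
    proof
      fix w assume "w \<in> FS c"
      then obtain F where "finite F" "F \<noteq> {}" "w = sum c F" unfolding FS_def by blast
      then show "w \<in> C \<inter> {t\<in>S. f t \<in> A}" using key by blast
    qed
    then show ?thesis unfolding IP_near_0_def using cS sc CS by blast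
  qed
qed

lemma MaxMin_lt: "finite A \<Longrightarrow> A \<noteq> {} \<Longrightarrow> finite B \<Longrightarrow> B \<noteq> {} \<Longrightarrow>
  (\<forall>a\<in>A. \<forall>b\<in>B. a < (b::nat)) \<Longrightarrow> Max A < Min B"
proof -
  assume a: "finite A" "A \<noteq> {}" "finite B" "B \<noteq> {}" "\<forall>a\<in>A. \<forall>b\<in>B. a < (b::nat)"
  have "Max A \<in> A" "Min B \<in> B" using a by simp_all
  then show ?thesis using a(5) by blast
qed

lemma ss_order:
  assumes H: "\<forall>n. finite (H n) \<and> H n \<noteq> {}" "\<forall>n. Max (H n) < Min (H (Suc n))"
    and ij: "i < j" and a: "a \<in> H i" and b: "b \<in> H j"
  shows "a < (b::nat)"
proof -
  have "\<forall>i. Max (H i) < Min (H (i + Suc d))" for d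
  proof (induction d)
    case 0 then show ?case using H by simp
  next
    case (Suc d)
    show ?case
    proof
      fix i
      have "Max (H i) < Min (H (i + Suc d))" using Suc by blast
      also have "\<dots> \<le> Max (H (i + Suc d))" using H Min_le[of "H (i + Suc d)" "Max (H (i + Suc d))"] by simp
      also have "\<dots> < Min (H (Suc (i + Suc d)))" using H by blast
      finally show "Max (H i) < Min (H (i + Suc (Suc d)))" by simp
    qed
  qed
  moreover obtain d where "j = Suc (i + d)" using less_imp_Suc_add[OF ij] by blast
  ultimately have "Max (H i) < Min (H j)" by simp
  moreover have "a \<le> Max (H i)" using H a by simp
  moreover have "Min (H j) \<le> b" using H b by simp
  ultimately show ?thesis by linarith
qed

lemma ss_disj:
  fixes H :: "nat \<Rightarrow> nat set"
  assumes H: "\<forall>n. finite (H n) \<and> H n \<noteq> {}" "\<forall>n. Max (H n) < Min (H (Suc n))"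
  shows "i \<noteq> j \<Longrightarrow> H i \<inter> H j = {}"
proof (rule ccontr)
  assume ij: "i \<noteq> j" and "H i \<inter> H j \<noteq> {}"
  then obtain a where a: "a \<in> H i" "a \<in> H j" by blast
  show False
  proof (cases "i < j")
    case True then show False using ss_order[OF H True a] by simp
  next
    case False then have ji: "j < i" using ij by simp
    show False using ss_order[OF H ji a(2,1)] by simp
  qed
qed

lemma ss_sum:
  fixes H :: "nat \<Rightarrow> nat set"
  assumes H: "\<forall>n. finite (H n) \<and> H n \<noteq> {}" "\<forall>n. Max (H n) < Min (H (Suc n))" and F: "finite F"
  shows "sum x (\<Union>(H ` F)) = sum (\<lambda>n. sum x (H n)) F"
proof (rule sum.UNION_disjoint[OF F])
  show "\<forall>i\<in>F. finite (H i)" using H(1) by blast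
  show "\<forall>i\<in>F. \<forall>j\<in>F. i \<noteq> j \<longrightarrow> H i \<inter> H j = {}" using ss_disj[OF H] by blast
qed

lemma ss_FS:
  assumes "sum_subsystem y z" shows "FS y \<subseteq> FS z"
proof
  obtain H where H: "\<forall>n. finite (H n) \<and> H n \<noteq> {}" "\<forall>n. Max (H n) < Min (H (Suc n))"
    "\<forall>n. y n = sum z (H n)" using assms unfolding sum_subsystem_def by blast
  fix v assume "v \<in> FS y"
  then obtain F where F: "finite F" "F \<noteq> {}" "v = sum y F" unfolding FS_def by blast
  have "v = sum z (\<Union>(H ` F))" using ss_sum[OF H(1,2) F(1), of z] F(3) H(3) by simp
  moreover have "finite (\<Union>(H ` F))" "\<Union>(H ` F) \<noteq> {}" using F H(1) by auto
  ultimately show "v \<in> FS z" using FS_mem by metis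
qed

lemma ss_trans:
  assumes "sum_subsystem y z" "sum_subsystem z x" shows "sum_subsystem y x"
proof -
  obtain K where K: "\<forall>n. finite (K n) \<and> K n \<noteq> {}" "\<forall>n. Max (K n) < Min (K (Suc n))"
    "\<forall>n. y n = sum z (K n)" using assms(1) unfolding sum_subsystem_def by blast
  obtain H where H: "\<forall>n. finite (H n) \<and> H n \<noteq> {}" "\<forall>n. Max (H n) < Min (H (Suc n))"
    "\<forall>n. z n = sum x (H n)" using assms(2) unfolding sum_subsystem_def by blast
  define H' where "H' n = \<Union>(H ` K n)" for n
  have fin: "\<forall>n. finite (H' n) \<and> H' n \<noteq> {}"
  proof
    fix n
    obtain i where "i \<in> K n" using K(1) by blast
    moreover obtain a where "a \<in> H i" using H(1) by blast
    ultimately have "H' n \<noteq> {}" unfolding H'_def by blast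
    moreover have "finite (H' n)" unfolding H'_def using H(1) K(1) by simp
    ultimately show "finite (H' n) \<and> H' n \<noteq> {}" by blast
  qed
  have ord: "\<forall>n. Max (H' n) < Min (H' (Suc n))"
  proof
    fix n
    have "\<forall>a\<in>H' n. \<forall>b\<in>H' (Suc n). a < b"
    proof (intro ballI)
      fix a b assume "a \<in> H' n" "b \<in> H' (Suc n)"
      then obtain i j where ij: "i \<in> K n" "j \<in> K (Suc n)" "a \<in> H i" "b \<in> H j" unfolding H'_def by blast
      have nn: "n < Suc n" by simp
      have "i < j" using ss_order[OF K(1,2) nn ij(1,2)] .
      then show "a < b" using ss_order[OF H(1,2) _ ij(3,4)] by blast
    qed
    moreover have "finite (H' n)" "H' n \<noteq> {}" "finite (H' (Suc n))" "H' (Suc n) \<noteq> {}"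
      using fin by blast+
    ultimately show "Max (H' n) < Min (H' (Suc n))" using MaxMin_lt by blast
  qed
  have "\<forall>n. y n = sum x (H' n)"
  proof
    fix n
    have "sum x (H' n) = sum (\<lambda>j. sum x (H j)) (K n)" unfolding H'_def
      using ss_sum[OF H(1,2), of "K n" x] K(1) by blast
    also have "\<dots> = sum z (K n)" using H(3) by simp
    finally show "y n = sum x (H' n)" using K(3) by simp
  qed
  then show ?thesis unfolding sum_subsystem_def using fin ord by blast
qed

lemma ss_subseq: "strict_mono r \<Longrightarrow> sum_subsystem (x \<circ> r) x"
  unfolding sum_subsystem_def
  by (rule exI[of _ "\<lambda>n. {r n}"]) (simp add: strict_mono_Suc_iff)

lemma lac_L1:
  fixes w :: "nat \<Rightarrow> quat"
  assumes dec: "\<forall>n. norm (w (Suc n)) \<le> norm (w n) / 4"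
  shows "\<forall>n. (\<Sum>k\<in>{n<..n+d}. norm (w k)) \<le> norm (w n) / 3"
proof (induction d)
  case 0 then show ?case by simp
next
  case (Suc d)
  show ?case
  proof
    fix n
    have eq: "{n<..n + Suc d} = insert (Suc n) {Suc n<..Suc n + d}" by auto
    have "(\<Sum>k\<in>{n<..n + Suc d}. norm (w k)) = norm (w (Suc n)) + (\<Sum>k\<in>{Suc n<..Suc n + d}. norm (w k))"
      unfolding eq by (subst sum.insert) auto
    also have "\<dots> \<le> norm (w (Suc n)) + norm (w (Suc n)) / 3"
      using Suc.IH[rule_format, of "Suc n"] by linarith
    also have "\<dots> \<le> norm (w n) / 3" using dec[rule_format, of n] by simp
    finally show "(\<Sum>k\<in>{n<..n + Suc d}. norm (w k)) \<le> norm (w n) / 3" .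
  qed
qed

lemma lac_L2:
  fixes w :: "nat \<Rightarrow> quat"
  assumes dec: "\<forall>n. norm (w (Suc n)) \<le> norm (w n) / 4"
    and K: "finite K" "\<forall>k\<in>K. n < k"
  shows "(\<Sum>k\<in>K. norm (w k)) \<le> norm (w n) / 3"
proof -
  have sub: "K \<subseteq> {n<..n + Max K}"
  proof
    fix k assume "k \<in> K"
    then have "k \<le> Max K" "n < k" using K by simp_all
    then show "k \<in> {n<..n + Max K}" by simp
  qed
  have "(\<Sum>k\<in>K. norm (w k)) \<le> (\<Sum>k\<in>{n<..n + Max K}. norm (w k))"
    by (rule sum_mono2[OF _ sub]) auto
  also have "\<dots> \<le> norm (w n) / 3" using lac_L1[OF dec] by blast
  finally show ?thesis .
qed

lemma lac_uniq:
  fixes w :: "nat \<Rightarrow> quat" and c :: "nat \<Rightarrow> real"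
  assumes nz: "\<forall>n. w n \<noteq> 0" and dec: "\<forall>n. norm (w (Suc n)) \<le> norm (w n) / 4"
    and K: "finite K" and c1: "\<forall>k. c k = 0 \<or> 1 \<le> \<bar>c k\<bar>" and c2: "\<forall>k. \<bar>c k\<bar> \<le> 2"
    and s: "(\<Sum>k\<in>K. c k *\<^sub>R w k) = 0"
  shows "\<forall>k\<in>K. c k = 0"
proof (rule ccontr)
  assume "\<not> (\<forall>k\<in>K. c k = 0)"
  define N where "N = {k\<in>K. c k \<noteq> 0}"
  have Nne: "N \<noteq> {}" "finite N" using \<open>\<not> (\<forall>k\<in>K. c k = 0)\<close> K unfolding N_def by auto
  define k0 where "k0 = Min N"
  have k0N: "k0 \<in> N" unfolding k0_def using Nne by simp
  have gt: "\<forall>k\<in>N - {k0}. k0 < k" unfolding k0_def using Nne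
    by (metis DiffE Min_le insertI1 order_le_neq_trans)
  have "(\<Sum>k\<in>K. c k *\<^sub>R w k) = (\<Sum>k\<in>N. c k *\<^sub>R w k)"
    unfolding N_def by (rule sum.mono_neutral_right[OF K]) auto
  also have "\<dots> = c k0 *\<^sub>R w k0 + (\<Sum>k\<in>N - {k0}. c k *\<^sub>R w k)"
    using sum.remove[OF Nne(2) k0N] by simp
  finally have eq: "c k0 *\<^sub>R w k0 = - (\<Sum>k\<in>N - {k0}. c k *\<^sub>R w k)" using s
    by (simp add: eq_neg_iff_add_eq_0)
  have "norm (c k0 *\<^sub>R w k0) \<le> (\<Sum>k\<in>N - {k0}. norm (c k *\<^sub>R w k))"
    unfolding eq norm_minus_cancel by (rule norm_sum)
  also have "\<dots> \<le> (\<Sum>k\<in>N - {k0}. 2 * norm (w k))"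
    using c2 by (intro sum_mono) (simp add: mult_right_mono)
  also have "\<dots> = 2 * (\<Sum>k\<in>N - {k0}. norm (w k))" by (simp add: sum_distrib_left)
  also have "\<dots> \<le> 2 * (norm (w k0) / 3)"
    using lac_L2[OF dec _ gt] Nne(2) by simp
  finally have A: "\<bar>c k0\<bar> * norm (w k0) \<le> 2 * (norm (w k0) / 3)" by simp
  have "c k0 \<noteq> 0" using k0N unfolding N_def by simp
  then have "1 \<le> \<bar>c k0\<bar>" using c1 by blast
  moreover have "norm (w k0) > 0" using nz by simp
  ultimately have "norm (w k0) \<le> \<bar>c k0\<bar> * norm (w k0)" by simp
  then show False using A \<open>norm (w k0) > 0\<close> by linarith
qed

lemma lac_nonzero:
  fixes w :: "nat \<Rightarrow> quat"
  assumes nz: "\<forall>n. w n \<noteq> 0" and dec: "\<forall>n. norm (w (Suc n)) \<le> norm (w n) / 4"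
    and G: "finite G" "G \<noteq> {}"
  shows "sum w G \<noteq> 0"
proof
  assume s: "sum w G = 0"
  have "\<forall>k\<in>G. (\<lambda>k. 1::real) k = 0"
    by (rule lac_uniq[OF nz dec G(1)]) (use s in auto)
  then show False using G by auto
qed

lemma lac_small:
  fixes w :: "nat \<Rightarrow> quat"
  assumes dec: "\<forall>n. norm (w (Suc n)) \<le> norm (w n) / 4" and G: "finite G"
  shows "norm (sum w G) \<le> 4/3 * norm (w 0)"
proof -
  have "norm (sum w G) \<le> (\<Sum>k\<in>G. norm (w k))" by (rule norm_sum)
  also have "\<dots> \<le> (\<Sum>k\<in>insert 0 G. norm (w k))" by (rule sum_mono2) (use G in auto)
  also have "\<dots> = norm (w 0) + (\<Sum>k\<in>G - {0}. norm (w k))"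
    using sum.insert_remove[of G "\<lambda>k. norm (w k)" 0] G by simp
  also have "\<dots> \<le> norm (w 0) + norm (w 0) / 3"
    using lac_L2[OF dec, of "G - {0}" 0] G by simp
  finally show ?thesis by simp
qed

lemma lac_disj:
  fixes w :: "nat \<Rightarrow> quat"
  assumes nz: "\<forall>n. w n \<noteq> 0" and dec: "\<forall>n. norm (w (Suc n)) \<le> norm (w n) / 4"
    and fin: "finite P" "finite Q" "finite R" and s: "sum w P + sum w Q = sum w R"
  shows "P \<inter> Q = {}"
proof (rule ccontr)
  assume "P \<inter> Q \<noteq> {}"
  then obtain k where k: "k \<in> P" "k \<in> Q" by blast
  define K where "K = P \<union> Q \<union> R"
  have fK: "finite K" unfolding K_def using fin by simp
  define c :: "nat \<Rightarrow> real" where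
    "c k = (if k \<in> P then 1 else 0) + (if k \<in> Q then 1 else 0) - (if k \<in> R then 1 else 0)" for k
  have ce: "c k *\<^sub>R w k = (if k \<in> P then w k else 0) + (if k \<in> Q then w k else 0) - (if k \<in> R then w k else 0)" for k
    unfolding c_def by (simp add: scaleR_left_distrib scaleR_diff_left)
  have sP: "sum w P = (\<Sum>k\<in>K. if k \<in> P then w k else 0)"
  proof -
    have "K \<inter> P = P" unfolding K_def by blast
    then show ?thesis using sum.inter_restrict[OF fK, of w P] by simp
  qed
  have sQ: "sum w Q = (\<Sum>k\<in>K. if k \<in> Q then w k else 0)"
  proof -
    have "K \<inter> Q = Q" unfolding K_def by blast
    then show ?thesis using sum.inter_restrict[OF fK, of w Q] by simp
  qed
  have sR: "sum w R = (\<Sum>k\<in>K. if k \<in> R then w k else 0)"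
  proof -
    have "K \<inter> R = R" unfolding K_def by blast
    then show ?thesis using sum.inter_restrict[OF fK, of w R] by simp
  qed
  have "(\<Sum>k\<in>K. c k *\<^sub>R w k) = sum w P + sum w Q - sum w R"
    unfolding ce sP sQ sR by (simp add: sum.distrib sum_subtractf)
  then have z: "(\<Sum>k\<in>K. c k *\<^sub>R w k) = 0" using s by simp
  have c1: "\<forall>k. c k = 0 \<or> 1 \<le> \<bar>c k\<bar>" and c2: "\<forall>k. \<bar>c k\<bar> \<le> 2" unfolding c_def by auto
  have "c k = 0" using lac_uniq[OF nz dec fK c1 c2 z] k unfolding K_def by blast
  then show False using k unfolding c_def by (auto split: if_splits)
qed

lemma Z0:
  fixes x :: "nat \<Rightarrow> quat" and S A :: "quat set"
  assumes add: "\<forall>a\<in>S. \<forall>b\<in>S. a + b \<in> S" and xS: "\<forall>n. x n \<in> S" and xsum: "summable x"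
    and freq: "\<forall>N. \<exists>n\<ge>N. x n \<noteq> 0" and A: "IP_star_near_0 S A"
  shows "\<exists>z0. sum_subsystem z0 x \<and> summable z0 \<and> FS z0 \<subseteq> A \<inter> (ball 0 1 - {0}) \<and> (\<forall>n. z0 n \<in> S)"
proof -
  have AS: "A \<subseteq> S" using A unfolding IP_star_near_0_def by blast
  have xlim: "x \<longlonglongrightarrow> 0" using xsum summable_LIMSEQ_zero by blast
  have "\<exists>r. \<forall>k. (x (r k) \<noteq> 0 \<and> norm (x (r k)) < 1/2) \<and>
      (r k < r (Suc k) \<and> norm (x (r (Suc k))) \<le> norm (x (r k)) / 4)"
  proof (rule dependent_nat_choice)
    show "\<exists>n. x n \<noteq> 0 \<and> norm (x n) < 1/2" using freq_small[OF xlim freq, of "1/2" 0] by auto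
  next
    fix n k assume a: "x n \<noteq> 0 \<and> norm (x n) < 1/2"
    then have "norm (x n) / 4 > 0" by simp
    from freq_small[OF xlim freq this, of n] obtain n' where
      "n' > n" "x n' \<noteq> 0" "norm (x n') < norm (x n) / 4" by blast
    then show "\<exists>n'. (x n' \<noteq> 0 \<and> norm (x n') < 1/2) \<and> (n < n' \<and> norm (x n') \<le> norm (x n) / 4)"
      using a by (intro exI[of _ n']) auto
  qed
  then obtain r where r: "\<And>k. x (r k) \<noteq> 0" "\<And>k. norm (x (r k)) < 1/2" "\<And>k. r k < r (Suc k)"
    "\<And>k. norm (x (r (Suc k))) \<le> norm (x (r k)) / 4" by blast
  have smr: "strict_mono r" using r(3) strict_mono_Suc_iff by blast
  define w where "w = x \<circ> r"
  have nz: "\<forall>n. w n \<noteq> 0" and dec: "\<forall>n. norm (w (Suc n)) \<le> norm (w n) / 4"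
    and w0: "norm (w 0) < 1/2" and wS: "\<forall>n. w n \<in> S"
    unfolding w_def using r xS by auto
  have wx: "sum_subsystem w x" unfolding w_def using ss_subseq[OF smr] .
  have wb: "norm (w n) \<le> (1/4)^n" for n
  proof (induction n)
    case 0 then show ?case using w0 by simp
  next
    case (Suc n) then show ?case using dec[rule_format, of n] by simp
  qed
  have sw: "summable w"
    using summable_comparison_test'[where g="\<lambda>n. (1/4::real)^n" and N=0 and f=w] wb
    by (simp add: summable_geometric)
  have "IP_near_0 S (FS w)" unfolding IP_near_0_def using wS sw FS_closed[OF add wS] by blast
  then have "IP_near_0 S (FS w \<inter> A)" using A unfolding IP_star_near_0_def by blast
  then obtain u where u: "\<forall>n. u n \<in> S" "summable u" "FS u \<subseteq> FS w \<inter> A"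
    unfolding IP_near_0_def by blast
  have "\<forall>n. \<exists>G. finite G \<and> G \<noteq> {} \<and> u n = sum w G"
  proof
    fix n
    have "u n \<in> FS w" using u(3) FS_mem[of "{n}" u] by auto
    then show "\<exists>G. finite G \<and> G \<noteq> {} \<and> u n = sum w G" unfolding FS_def by blast
  qed
  then obtain G where G: "\<And>n. finite (G n)" "\<And>n. G n \<noteq> {}" "\<And>n. u n = sum w (G n)" by metis
  have disj: "G i \<inter> G j = {}" if ij: "i \<noteq> j" for i j
  proof -
    have "sum u {i, j} \<in> FS w" using u(3) FS_mem[of "{i,j}" u] by auto
    then obtain R where R: "finite R" "sum u {i,j} = sum w R" unfolding FS_def by blast
    then have "sum w (G i) + sum w (G j) = sum w R" using ij G(3) by simp
    then show ?thesis using lac_disj[OF nz dec G(1) G(1) R(1)] by blast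
  qed
  have injm: "inj (\<lambda>n. Min (G n))"
  proof (rule injI)
    fix i j assume "Min (G i) = Min (G j)"
    moreover have "Min (G i) \<in> G i" "Min (G j) \<in> G j" using G by simp_all
    ultimately have "G i \<inter> G j \<noteq> {}" by auto
    then show "i = j" using disj by blast
  qed
  have evm: "eventually (\<lambda>n. M < Min (G n)) sequentially" for M
  proof -
    have "finite ((\<lambda>n. Min (G n)) -` {..M})" by (rule finite_vimageI[OF _ injm]) simp
    moreover have "{n. \<not> M < Min (G n)} = (\<lambda>n. Min (G n)) -` {..M}" by auto
    ultimately have "finite {n. \<not> M < Min (G n)}" by simp
    then show ?thesis using eventually_cofinite cofinite_eq_sequentially by metis
  qed
  have ulim: "u \<longlonglongrightarrow> 0" using u(2) summable_LIMSEQ_zero by blast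
  have evu: "eventually (\<lambda>n. norm (u n) < e) sequentially" if "e > 0" for e
    using ulim that unfolding LIMSEQ_iff eventually_sequentially by simp
  have "\<exists>\<sigma>. \<forall>k. norm (u (\<sigma> k)) \<le> (1/2)^k \<and> (\<sigma> k < \<sigma> (Suc k) \<and> Max (G (\<sigma> k)) < Min (G (\<sigma> (Suc k))))"
  proof (rule dependent_nat_choice)
    obtain N where "\<forall>n\<ge>N. norm (u n) < 1" using evu[of 1] unfolding eventually_sequentially by auto
    then have "norm (u N) \<le> (1/2)^0" by (simp add: less_imp_le)
    then show "\<exists>n. norm (u n) \<le> (1/2)^0" by blast
  next
    fix n k assume "norm (u n) \<le> (1/2)^k"
    have "eventually (\<lambda>n'. (n < n' \<and> Max (G n) < Min (G n')) \<and> norm (u n') < (1/2)^Suc k) sequentially"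
      using eventually_gt_at_top[of n] evm[of "Max (G n)"] evu[of "(1/2)^Suc k"]
      by (simp add: eventually_conj)
    then obtain n' where "(n < n' \<and> Max (G n) < Min (G n')) \<and> norm (u n') < (1/2)^Suc k"
      unfolding eventually_sequentially by auto
    then show "\<exists>n'. norm (u n') \<le> (1/2)^Suc k \<and> (n < n' \<and> Max (G n) < Min (G n'))"
      by (intro exI[of _ n']) auto
  qed
  then obtain \<sigma> where \<sigma>: "\<And>k. norm (u (\<sigma> k)) \<le> (1/2)^k" "\<And>k. \<sigma> k < \<sigma> (Suc k)"
    "\<And>k. Max (G (\<sigma> k)) < Min (G (\<sigma> (Suc k)))" by blast
  have sms: "strict_mono \<sigma>" using \<sigma>(2) strict_mono_Suc_iff by blast
  define z0 where "z0 = u \<circ> \<sigma>"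
  have zw: "sum_subsystem z0 w" unfolding sum_subsystem_def z0_def
    by (rule exI[of _ "\<lambda>k. G (\<sigma> k)"]) (use G \<sigma>(3) in simp)
  have zx: "sum_subsystem z0 x" using ss_trans[OF zw wx] .
  have sz: "summable z0"
    using summable_comparison_test'[where g="\<lambda>n. (1/2::real)^n" and N=0 and f=z0] \<sigma>(1)
    by (simp add: summable_geometric z0_def)
  have FA: "FS z0 \<subseteq> A" unfolding z0_def using FS_reindex[of \<sigma> u] strict_mono_imp_inj_on[OF sms] u(3) by blast
  have "FS w \<subseteq> ball 0 1 - {0}"
  proof
    fix v assume "v \<in> FS w"
    then obtain F where F: "finite F" "F \<noteq> {}" "v = sum w F" unfolding FS_def by blast
    have "norm v \<le> 4/3 * norm (w 0)" using lac_small[OF dec F(1)] F(3) by simp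
    also have "\<dots> < 1" using w0 by simp
    finally show "v \<in> ball 0 1 - {0}" using lac_nonzero[OF nz dec F(1,2)] F(3) by (simp add: dist_norm)
  qed
  then have FB: "FS z0 \<subseteq> ball 0 1 - {0}" using ss_FS[OF zw] by blast
  have "\<forall>n. z0 n \<in> S" using FA AS FS_mem[of "{_}" z0] by auto
  then show ?thesis using zx sz FA FB by blast
qed

lemma qprod_Cons: "qprod_list (a # xs) = qmult a (qprod_list xs)"
  by (simp add: qprod_list_def)

lemma qprod_Nil: "qprod_list [] = qone"
  by (simp add: qprod_list_def)

lemma qprod_append: "qprod_list (xs @ ys) = qmult (qprod_list xs) (qprod_list ys)"
  by (induction xs) (simp_all add: qprod_Cons qprod_Nil qmult_assoc)

lemma qprod_closed:
  assumes mc: "\<forall>a\<in>S \<inter> ball 0 1 - {0}. \<forall>b\<in>S \<inter> ball 0 1 - {0}. qmult a b \<in> S \<inter> ball 0 1 - {0}"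
  shows "xs \<noteq> [] \<Longrightarrow> set xs \<subseteq> S \<inter> ball 0 1 - {0} \<Longrightarrow> qprod_list xs \<in> S \<inter> ball 0 1 - {0}"
proof (induction xs)
  case Nil then show ?case by simp
next
  case (Cons a xs)
  show ?case
  proof (cases "xs = []")
    case True then show ?thesis using Cons.prems by (simp add: qprod_Cons qprod_Nil)
  next
    case False
    then have "qprod_list xs \<in> S \<inter> ball 0 1 - {0}" using Cons by simp
    moreover have "a \<in> S \<inter> ball 0 1 - {0}" using Cons.prems by simp
    ultimately show ?thesis using mc by (simp add: qprod_Cons)
  qed
qed

lemma qprod_opt:
  assumes mc: "\<forall>a\<in>S \<inter> ball 0 1 - {0}. \<forall>b\<in>S \<inter> ball 0 1 - {0}. qmult a b \<in> S \<inter> ball 0 1 - {0}"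
    and "set xs \<subseteq> S \<inter> ball 0 1 - {0}"
  shows "qprod_list xs \<in> insert qone (S \<inter> ball 0 1 - {0})"
  using qprod_closed[OF mc _ assms(2)] by (cases "xs = []") (simp_all add: qprod_Nil)

lemma qone_nz: "qone \<noteq> 0"
  by (simp add: q_eq qone_comp)

lemma GLq:
  assumes add: "\<forall>a\<in>S. \<forall>b\<in>S. a + b \<in> S"
    and mc: "\<forall>a\<in>S \<inter> ball 0 1 - {0}. \<forall>b\<in>S \<inter> ball 0 1 - {0}. qmult a b \<in> S \<inter> ball 0 1 - {0}"
    and P: "P \<in> insert qone (S \<inter> ball 0 1 - {0})" and A: "IP_star_near_0 S A"
  shows "IP_star_near_0 S {t\<in>S. qmult P t \<in> A}" "IP_star_near_0 S {t\<in>S. qmult t P \<in> A}"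
proof -
  have nz: "P \<noteq> 0" using P qone_nz by auto
  obtain g where g: "linear g" "\<forall>t. g (qmult P t) = t" using left_inv[OF nz] by blast
  obtain h where h: "linear h" "\<forall>t. h (qmult t P) = t" using right_inv[OF nz] by blast
  have fS1: "\<forall>t\<in>S \<inter> ball 0 1 - {0}. qmult P t \<in> S"
  proof
    fix t assume t: "t \<in> S \<inter> ball 0 1 - {0}"
    show "qmult P t \<in> S"
    proof (cases "P = qone")
      case True then show ?thesis using t by simp
    next
      case False then have "P \<in> S \<inter> ball 0 1 - {0}" using P by simp
      then show ?thesis using mc t by blast
    qed
  qed
  have fS2: "\<forall>t\<in>S \<inter> ball 0 1 - {0}. qmult t P \<in> S"
  proof
    fix t assume t: "t \<in> S \<inter> ball 0 1 - {0}"
    show "qmult t P \<in> S"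
    proof (cases "P = qone")
      case True then show ?thesis using t by simp
    next
      case False then have "P \<in> S \<inter> ball 0 1 - {0}" using P by simp
      then show ?thesis using mc t by blast
    qed
  qed
  note fS = fS1 fS2
  show "IP_star_near_0 S {t\<in>S. qmult P t \<in> A}"
    by (rule GL[OF add linear_qmult_left g fS(1) A])
  show "IP_star_near_0 S {t\<in>S. qmult t P \<in> A}"
    by (rule GL[OF add linear_qmult_right h fS(2) A])
qed

definition Pr :: "nat \<Rightarrow> (nat list \<times> nat list) set" where
  "Pr n = {l. set l \<subseteq> {..<n} \<and> distinct l} \<times> {l. set l \<subseteq> {..<n} \<and> distinct l}"

lemma Pr_finite: "finite (Pr n)"
  unfolding Pr_def using finite_subset_distinct[of "{..<n}"] by simp

definition Dset :: "quat set \<Rightarrow> quat set \<Rightarrow> (nat \<Rightarrow> quat) \<Rightarrow> nat list \<times> nat list \<Rightarrow> quat set" where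
  "Dset S A yv p = {t\<in>S. qmult t (qprod_list (map yv (snd p))) \<in>
      {v\<in>S. qmult (qprod_list (map yv (fst p))) v \<in> A}}"

lemma Good_IP:
  assumes add: "\<forall>a\<in>S. \<forall>b\<in>S. a + b \<in> S"
    and mc: "\<forall>a\<in>S \<inter> ball 0 1 - {0}. \<forall>b\<in>S \<inter> ball 0 1 - {0}. qmult a b \<in> S \<inter> ball 0 1 - {0}"
    and A: "IP_star_near_0 S A" and yv: "\<forall>j<n. yv j \<in> S \<inter> ball 0 1 - {0}"
  shows "IP_star_near_0 S (S \<inter> \<Inter>(Dset S A yv ` Pr n))"
proof (rule IPstar_Inter[OF Pr_finite], rule ballI)
  fix p assume p: "p \<in> Pr n"
  have s1: "set (map yv (fst p)) \<subseteq> S \<inter> ball 0 1 - {0}" using p yv unfolding Pr_def by auto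
  have s2: "set (map yv (snd p)) \<subseteq> S \<inter> ball 0 1 - {0}" using p yv unfolding Pr_def by auto
  have E: "IP_star_near_0 S {v\<in>S. qmult (qprod_list (map yv (fst p))) v \<in> A}"
    using GLq(1)[OF add mc qprod_opt[OF mc s1] A] .
  show "IP_star_near_0 S (Dset S A yv p)"
    unfolding Dset_def using GLq(2)[OF add mc qprod_opt[OF mc s2] E] .
qed

definition step :: "quat set \<Rightarrow> (nat \<Rightarrow> quat) \<Rightarrow> (nat \<Rightarrow> nat set) \<Rightarrow> nat \<Rightarrow> bool" where
  "step A z0 b i \<longleftrightarrow> finite (b i) \<and> b i \<noteq> {} \<and> (\<forall>j<i. \<forall>a\<in>b j. \<forall>c\<in>b i. a < c) \<and>
     (\<forall>l1 l2. set l1 \<subseteq> {..<i} \<and> distinct l1 \<and> set l2 \<subseteq> {..<i} \<and> distinct l2 \<longrightarrow>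
        qmult (qprod_list (map (\<lambda>j. sum z0 (b j)) l1))
          (qmult (sum z0 (b i)) (qprod_list (map (\<lambda>j. sum z0 (b j)) l2))) \<in> A)"

lemma map_cong_lt: "set l \<subseteq> {..<i} \<Longrightarrow> \<forall>j<i. f j = g j \<Longrightarrow> map f l = map g l"
  by (rule map_cong) auto

lemma step_cong:
  assumes "\<forall>j\<le>i. b j = b' j"
  shows "step A z0 b i = step A z0 b' i"
proof -
  have bi: "b i = b' i" using assms by simp
  have lt: "\<forall>j<i. b j = b' j" using assms by simp
  have m: "map (\<lambda>j. sum z0 (b j)) l = map (\<lambda>j. sum z0 (b' j)) l" if "set l \<subseteq> {..<i}" for l
    using map_cong_lt[OF that, of "\<lambda>j. sum z0 (b j)" "\<lambda>j. sum z0 (b' j)"] lt by simp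
  have ord: "(\<forall>j<i. \<forall>a\<in>b j. \<forall>c\<in>b i. a < c) = (\<forall>j<i. \<forall>a\<in>b' j. \<forall>c\<in>b' i. a < c)"
    using lt bi by auto
  have prod: "(\<forall>l1 l2. set l1 \<subseteq> {..<i} \<and> distinct l1 \<and> set l2 \<subseteq> {..<i} \<and> distinct l2 \<longrightarrow>
        qmult (qprod_list (map (\<lambda>j. sum z0 (b j)) l1))
          (qmult (sum z0 (b i)) (qprod_list (map (\<lambda>j. sum z0 (b j)) l2))) \<in> A) =
     (\<forall>l1 l2. set l1 \<subseteq> {..<i} \<and> distinct l1 \<and> set l2 \<subseteq> {..<i} \<and> distinct l2 \<longrightarrow>
        qmult (qprod_list (map (\<lambda>j. sum z0 (b' j)) l1))
          (qmult (sum z0 (b' i)) (qprod_list (map (\<lambda>j. sum z0 (b' j)) l2))) \<in> A)"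
  proof (intro iff_allI imp_cong refl)
    fix l1 l2 assume "set l1 \<subseteq> {..<i} \<and> distinct l1 \<and> set l2 \<subseteq> {..<i} \<and> distinct l2"
    then have "set l1 \<subseteq> {..<i}" "set l2 \<subseteq> {..<i}" by simp_all
    then show "(qmult (qprod_list (map (\<lambda>j. sum z0 (b j)) l1))
          (qmult (sum z0 (b i)) (qprod_list (map (\<lambda>j. sum z0 (b j)) l2))) \<in> A) =
       (qmult (qprod_list (map (\<lambda>j. sum z0 (b' j)) l1))
          (qmult (sum z0 (b' i)) (qprod_list (map (\<lambda>j. sum z0 (b' j)) l2))) \<in> A)"
      using m bi by metis
  qed
  show ?thesis unfolding step_def using bi ord prod by simp
qed

lemma step_ex:
  fixes S A :: "quat set" and z0 :: "nat \<Rightarrow> quat"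
  assumes add: "\<forall>a\<in>S. \<forall>b\<in>S. a + b \<in> S"
    and mc: "\<forall>a\<in>S \<inter> ball 0 1 - {0}. \<forall>b\<in>S \<inter> ball 0 1 - {0}. qmult a b \<in> S \<inter> ball 0 1 - {0}"
    and A: "IP_star_near_0 S A" and z0S: "\<forall>n. z0 n \<in> S" and sz: "summable z0"
    and FSz: "FS z0 \<subseteq> A \<inter> (ball 0 1 - {0})"
    and prev: "\<forall>j<i. finite (b j) \<and> b j \<noteq> {}"
  shows "\<exists>K. step A z0 (b(i:=K)) i"
proof -
  have AS: "A \<subseteq> S" using A unfolding IP_star_near_0_def by blast
  define yv where "yv = (\<lambda>j. sum z0 (b j))"
  have yvB: "\<forall>j<i. yv j \<in> S \<inter> ball 0 1 - {0}"
  proof (intro allI impI)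
    fix j assume "j < i"
    then have "finite (b j)" "b j \<noteq> {}" using prev by simp_all
    then have "yv j \<in> FS z0" unfolding yv_def by (rule FS_mem)
    then show "yv j \<in> S \<inter> ball 0 1 - {0}" using FSz AS by blast
  qed
  define Gd where "Gd = S \<inter> \<Inter>(Dset S A yv ` Pr i)"
  have GdIP: "IP_star_near_0 S Gd" unfolding Gd_def by (rule Good_IP[OF add mc A yvB])
  define U where "U = \<Union>(b ` {..<i})"
  have fU: "finite U" unfolding U_def using prev by simp
  define m where "m = Suc (Max (insert 0 U))"
  have Um: "\<forall>a\<in>U. a < m" unfolding m_def using fU by (simp add: le_imp_less_Suc)
  define Cm where "Cm = {sum z0 F | F. finite F \<and> F \<noteq> {} \<and> F \<subseteq> {m..}}"
  have CmS: "Cm \<subseteq> S"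
  proof
    fix v assume "v \<in> Cm"
    then obtain F where "finite F" "F \<noteq> {}" "v = sum z0 F" unfolding Cm_def by blast
    then have "v \<in> FS z0" using FS_mem[of F z0] by simp
    then show "v \<in> S" using FSz AS by blast
  qed
  define z' where "z' = (\<lambda>n. z0 (n + m))"
  have z'S: "\<forall>n. z' n \<in> S" unfolding z'_def using z0S by simp
  have sz': "summable z'" unfolding z'_def using sz summable_iff_shift by blast
  have "FS z' \<subseteq> Cm"
  proof
    fix v assume "v \<in> FS z'"
    then obtain F where F: "finite F" "F \<noteq> {}" "v = sum z' F" unfolding FS_def by blast
    have inj: "inj_on (\<lambda>n. n + m) F" by (simp add: inj_on_def)
    have "v = sum z0 ((\<lambda>n. n + m) ` F)" using F(3) sum.reindex[OF inj, of z0] unfolding z'_def by simp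
    moreover have "finite ((\<lambda>n. n + m) ` F)" "(\<lambda>n. n + m) ` F \<noteq> {}" "(\<lambda>n. n + m) ` F \<subseteq> {m..}"
      using F by auto
    ultimately show "v \<in> Cm" unfolding Cm_def by blast
  qed
  then have "IP_near_0 S Cm" unfolding IP_near_0_def using CmS z'S sz' by blast
  then have "IP_near_0 S (Cm \<inter> Gd)" using GdIP unfolding IP_star_near_0_def by blast
  then obtain t where t: "t \<in> Cm" "t \<in> Gd" using IP_nonempty by blast
  then obtain F where F: "finite F" "F \<noteq> {}" "F \<subseteq> {m..}" "t = sum z0 F" unfolding Cm_def by blast
  define b' where "b' = b(i:=F)"
  have b'i: "b' i = F" unfolding b'_def by simp
  have b'j: "\<forall>j<i. b' j = b j" unfolding b'_def by simp
  have ord: "\<forall>j<i. \<forall>a\<in>b' j. \<forall>c\<in>b' i. a < c"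
  proof (intro allI impI ballI)
    fix j a c assume j: "j < i" and a: "a \<in> b' j" and c: "c \<in> b' i"
    have "a \<in> U" using j a b'j unfolding U_def by auto
    then have "a < m" using Um by blast
    moreover have "m \<le> c" using c b'i F(3) by auto
    ultimately show "a < c" by simp
  qed
  have prod: "\<forall>l1 l2. set l1 \<subseteq> {..<i} \<and> distinct l1 \<and> set l2 \<subseteq> {..<i} \<and> distinct l2 \<longrightarrow>
        qmult (qprod_list (map (\<lambda>j. sum z0 (b' j)) l1))
          (qmult (sum z0 (b' i)) (qprod_list (map (\<lambda>j. sum z0 (b' j)) l2))) \<in> A"
  proof (intro allI impI)
    fix l1 l2 assume l: "set l1 \<subseteq> {..<i} \<and> distinct l1 \<and> set l2 \<subseteq> {..<i} \<and> distinct l2"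
    then have "(l1, l2) \<in> Pr i" unfolding Pr_def by simp
    then have "t \<in> Dset S A yv (l1, l2)" using t(2) unfolding Gd_def by blast
    then have tA: "qmult (qprod_list (map yv l1)) (qmult t (qprod_list (map yv l2))) \<in> A"
      unfolding Dset_def by simp
    have lt: "\<forall>j<i. (\<lambda>j. sum z0 (b' j)) j = yv j" unfolding yv_def using b'j by simp
    have e1: "map (\<lambda>j. sum z0 (b' j)) l1 = map yv l1" using map_cong_lt[of l1 i "\<lambda>j. sum z0 (b' j)" yv] l lt by simp
    have e2: "map (\<lambda>j. sum z0 (b' j)) l2 = map yv l2" using map_cong_lt[of l2 i "\<lambda>j. sum z0 (b' j)" yv] l lt by simp
    have e3: "sum z0 (b' i) = t" using b'i F(4) by simp
    show "qmult (qprod_list (map (\<lambda>j. sum z0 (b' j)) l1))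
          (qmult (sum z0 (b' i)) (qprod_list (map (\<lambda>j. sum z0 (b' j)) l2))) \<in> A" unfolding e1 e2 e3 using tA .
  qed
  have "step A z0 b' i" unfolding step_def using b'i F(1,2) ord prod by simp
  then show ?thesis unfolding b'_def by blast
qed

lemma main_z:
  fixes S A :: "quat set" and x :: "nat \<Rightarrow> quat"
  assumes xS: "\<forall>n. x n \<in> S" and ev: "\<exists>N. \<forall>n\<ge>N. x n = 0" and A: "IP_star_near_0 S A"
  shows "\<exists>y. sum_subsystem y x \<and> FS y \<union> FP y \<subseteq> A"
proof -
  obtain N where N: "\<forall>n\<ge>N. x n = 0" using ev by blast
  have "0 \<in> S" using xS N by (metis order_refl)
  then have A0: "0 \<in> A" using IPstar_zero[OF A] by blast
  define y :: "nat \<Rightarrow> quat" where "y = (\<lambda>_. 0)"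
  have "sum_subsystem y x" unfolding sum_subsystem_def y_def
    by (rule exI[of _ "\<lambda>n. {n + N}"]) (simp add: N)
  moreover have "FS y \<subseteq> A" unfolding y_def FS_zero using A0 by simp
  moreover have "FP y \<subseteq> A"
  proof
    fix v assume "v \<in> FP y"
    then obtain l where l: "l \<noteq> []" "v = qprod_list (map y l)" unfolding FP_def by blast
    then obtain a l' where "l = a # l'" by (cases l) auto
    then have "v = 0" using l(2) unfolding y_def by (simp add: qprod_Cons)
    then show "v \<in> A" using A0 by simp
  qed
  ultimately show ?thesis by blast
qed

lemma step_fin: "step A z0 b i \<Longrightarrow> finite (b i)" "step A z0 b i \<Longrightarrow> b i \<noteq> {}"
  by (simp_all add: step_def)

lemma step_ord: "step A z0 b i \<Longrightarrow> j < i \<Longrightarrow> a \<in> b j \<Longrightarrow> c \<in> b i \<Longrightarrow> a < c"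
  unfolding step_def by blast

lemma step_prod: "step A z0 b i \<Longrightarrow> set l1 \<subseteq> {..<i} \<Longrightarrow> distinct l1 \<Longrightarrow>
  set l2 \<subseteq> {..<i} \<Longrightarrow> distinct l2 \<Longrightarrow>
  qmult (qprod_list (map (\<lambda>j. sum z0 (b j)) l1))
          (qmult (sum z0 (b i)) (qprod_list (map (\<lambda>j. sum z0 (b j)) l2))) \<in> A"
  unfolding step_def by blast

lemma main_nz:
  fixes S A :: "quat set" and x :: "nat \<Rightarrow> quat"
  assumes add: "\<forall>a\<in>S. \<forall>b\<in>S. a + b \<in> S"
    and mc: "\<forall>a\<in>S \<inter> ball 0 1 - {0}. \<forall>b\<in>S \<inter> ball 0 1 - {0}. qmult a b \<in> S \<inter> ball 0 1 - {0}"
    and xS: "\<forall>n. x n \<in> S" and xsum: "summable x"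
    and freq: "\<forall>N. \<exists>n\<ge>N. x n \<noteq> 0" and A: "IP_star_near_0 S A"
  shows "\<exists>y. sum_subsystem y x \<and> FS y \<union> FP y \<subseteq> A"
proof -
  obtain z0 where z0: "sum_subsystem z0 x" "summable z0" "FS z0 \<subseteq> A \<inter> (ball 0 1 - {0})" "\<forall>n. z0 n \<in> S"
    using Z0[OF add xS xsum freq A] by blast
  have "\<exists>f. \<forall>n. (\<forall>i<n. step A z0 (f n) i) \<and> (\<forall>j<n. f (Suc n) j = f n j)"
  proof (rule dependent_nat_choice)
    show "\<exists>b. \<forall>i<0. step A z0 b i" by simp
  next
    fix b n assume P: "\<forall>i<n. step A z0 b i"
    have prev: "\<forall>j<n. finite (b j) \<and> b j \<noteq> {}" using P step_fin by blast
    obtain K where K: "step A z0 (b(n:=K)) n" using step_ex[OF add mc A z0(4,2,3) prev] by blast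
    have "\<forall>i<Suc n. step A z0 (b(n:=K)) i"
    proof (intro allI impI)
      fix i assume "i < Suc n"
      show "step A z0 (b(n:=K)) i"
      proof (cases "i = n")
        case True then show ?thesis using K by simp
      next
        case False
        then have "i < n" using \<open>i < Suc n\<close> by simp
        then have "\<forall>j\<le>i. b j = (b(n:=K)) j" by simp
        then show ?thesis using step_cong[of i b "b(n:=K)" A z0] P \<open>i < n\<close> by simp
      qed
    qed
    moreover have "\<forall>j<n. (b(n:=K)) j = b j" by simp
    ultimately have "(\<forall>i<Suc n. step A z0 (b(n:=K)) i) \<and> (\<forall>j<n. (b(n:=K)) j = b j)"
      by (rule conjI)
    then show "\<exists>b'. (\<forall>i<Suc n. step A z0 b' i) \<and> (\<forall>j<n. b' j = b j)" by (rule exI[where x="b(n:=K)"])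
  qed
  then obtain f where f0: "\<forall>n. (\<forall>i<n. step A z0 (f n) i) \<and> (\<forall>j<n. f (Suc n) j = f n j)"
    by (rule exE)
  have f1: "step A z0 (f n) i" if "i < n" for n i using f0 that by blast
  have f2: "f (Suc n) j = f n j" if "j < n" for n j using f0 that by blast
  note f = f1 f2
  have agree: "\<forall>j<n. f (n + d) j = f n j" for n d
  proof (induction d)
    case 0 then show ?case by simp
  next
    case (Suc d) then show ?case using f(2)[of _ "n + d"] by simp
  qed
  define blk where "blk j = f (Suc j) j" for j
  have blkk: "blk j = f (Suc k) j" if "j \<le> k" for j k
  proof -
    have e: "Suc j + (k - j) = Suc k" using that by simp
    have "f (Suc j + (k - j)) j = f (Suc j) j" using agree[of "Suc j" "k - j"] by blast
    then show ?thesis unfolding blk_def e by simp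
  qed
  have stepb: "step A z0 blk k" for k
  proof -
    have "step A z0 (f (Suc k)) k" using f(1) by simp
    moreover have "\<forall>j\<le>k. f (Suc k) j = blk j" using blkk by simp
    ultimately show ?thesis using step_cong[of k "f (Suc k)" blk A z0] by simp
  qed
  define y where "y k = sum z0 (blk k)" for k
  have fin: "\<forall>n. finite (blk n) \<and> blk n \<noteq> {}" using stepb step_fin by blast
  have ord: "\<forall>n. Max (blk n) < Min (blk (Suc n))"
  proof
    fix n
    have "\<forall>a\<in>blk n. \<forall>c\<in>blk (Suc n). a < c" using step_ord[OF stepb[of "Suc n"], of n] by blast
    moreover have "finite (blk n)" "blk n \<noteq> {}" "finite (blk (Suc n))" "blk (Suc n) \<noteq> {}"
      using fin by blast+
    ultimately show "Max (blk n) < Min (blk (Suc n))" using MaxMin_lt by blast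
  qed
  have yz: "sum_subsystem y z0" unfolding sum_subsystem_def
    by (rule exI[of _ blk]) (use fin ord in \<open>simp add: y_def\<close>)
  have yx: "sum_subsystem y x" using ss_trans[OF yz z0(1)] .
  have FSy: "FS y \<subseteq> A" using ss_FS[OF yz] z0(3) by blast
  have FPy: "FP y \<subseteq> A"
  proof
    fix v assume "v \<in> FP y"
    then obtain l where l: "l \<noteq> []" "distinct l" "v = qprod_list (map y l)" unfolding FP_def by blast
    define k where "k = Max (set l)"
    have kl: "k \<in> set l" unfolding k_def using l(1) by simp
    have kmax: "\<forall>j\<in>set l. j \<le> k" unfolding k_def by simp
    obtain l1 l2 where l12: "l = l1 @ k # l2" using split_list[OF kl] by blast
    have d: "distinct l1" "distinct l2" "k \<notin> set l1" "k \<notin> set l2" using l(2) l12 by auto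
    have s1: "set l1 \<subseteq> {..<k}"
    proof
      fix j assume "j \<in> set l1"
      then have "j \<le> k" "j \<noteq> k" using kmax d(3) l12 by auto
      then show "j \<in> {..<k}" by simp
    qed
    have s2: "set l2 \<subseteq> {..<k}"
    proof
      fix j assume "j \<in> set l2"
      then have "j \<le> k" "j \<noteq> k" using kmax d(4) l12 by auto
      then show "j \<in> {..<k}" by simp
    qed
    have "qmult (qprod_list (map (\<lambda>j. sum z0 (blk j)) l1))
          (qmult (sum z0 (blk k)) (qprod_list (map (\<lambda>j. sum z0 (blk j)) l2))) \<in> A"
      by (rule step_prod[OF stepb[of k] s1 d(1) s2 d(2)])
    then have "qmult (qprod_list (map y l1)) (qmult (y k) (qprod_list (map y l2))) \<in> A"
      unfolding y_def .
    moreover have "v = qmult (qprod_list (map y l1)) (qmult (y k) (qprod_list (map y l2)))"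
      using l(3) l12 by (simp add: qprod_append qprod_Cons)
    ultimately show "v \<in> A" by simp
  qed
  show ?thesis using yx FSy FPy by blast
qed

theorem theorem2p5:
  fixes S :: "quat set" and x :: "nat \<Rightarrow> quat" and A :: "quat set"
  assumes dense: "closure S = UNIV"
    and add_closed: "\<forall>a\<in>S. \<forall>b\<in>S. a + b \<in> S"
    and mult_closed: "\<forall>a\<in>S \<inter> ball 0 1 - {0}. \<forall>b\<in>S \<inter> ball 0 1 - {0}.
                         qmult a b \<in> S \<inter> ball 0 1 - {0}"
    and xS: "\<forall>n. x n \<in> S"
    and xsum: "x sums 0"
    and A: "IP_star_near_0 S A"
  shows "\<exists>y. sum_subsystem y x \<and> FS y \<union> FP y \<subseteq> A"
proof (cases "\<exists>N. \<forall>n\<ge>N. x n = 0")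
  case True show ?thesis using main_z[OF xS True A] .
next
  case False
  then have freq: "\<forall>N. \<exists>n\<ge>N. x n \<noteq> 0" by blast
  have "summable x" using xsum sums_summable by blast
  then show ?thesis using main_nz[OF add_closed mult_closed xS _ freq A] by blast
qed

end
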